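(* Let $k \in \mathbb{R}$ and let $M$ be a real symmetric matrix whose diagonal entries are all equal to $k$ and whose off-diagonal entries are integers. Suppose that the multiplicity of $0$ as an eigenvalue of $M$ is greater than the maximum multiplicity of the non-zero eigenvalues of $M$. Then $k$ is an integer. *)

theory Defs
  imports "Jordan_Normal_Form.Char_Poly"
begin

text \<open>Multiplicity of a (real) eigenvalue: its order as a root of the characteristic polynomial
  (for a real symmetric matrix algebraic and geometric multiplicity coincide).\<close>
definition eig_mult :: "real mat \<Rightarrow> real \<Rightarrow> nat" where
  "eig_mult M \<mu> = order \<mu> (char_poly M)"

end

theory Submission imports Defs "HOL-Computational_Algebra.Field_as_Ring" begin

fun hchain :: "'a::{field_char_0,field_gcd} poly \<Rightarrow> nat \<Rightarrow> 'a poly" where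
  "hchain q 0 = q"
| "hchain q (Suc j) = gcd (hchain q j) (pderiv (hchain q j))"

lemma order_gcd_min:
  fixes p q :: "'a::{field_char_0,field_gcd} poly"
  assumes "p \<noteq> 0" "q \<noteq> 0"
  shows "order a (gcd p q) = min (order a p) (order a q)"
proof -
  have g: "gcd p q \<noteq> 0" using assms by simp
  have e: "\<And>n. n \<le> order a (gcd p q) \<longleftrightarrow> n \<le> order a p \<and> n \<le> order a q"
    using g assms by (metis gcd_greatest_iff order_divides)
  have "order a (gcd p q) \<le> order a p \<and> order a (gcd p q) \<le> order a q"
    using e[of "order a (gcd p q)"] by simp
  then have 1: "order a (gcd p q) \<le> min (order a p) (order a q)" by simp
  have 2: "min (order a p) (order a q) \<le> order a (gcd p q)"
    using e[of "min (order a p) (order a q)"] by simp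
  from 1 2 show ?thesis by (rule antisym)
qed

lemma hchain_props:
  fixes q :: "'a::{field_char_0,field_gcd} poly"
  assumes "q \<noteq> 0"
  shows "hchain q j \<noteq> 0 \<and> hchain q j dvd q \<and> (\<forall>a. order a (hchain q j) = order a q - j)"
proof (induction j)
  case 0 then show ?case using assms by simp
next
  case (Suc j)
  define h where "h = hchain q j"
  have h0: "h \<noteq> 0" and hd: "h dvd q" and ho: "\<And>a. order a h = order a q - j"
    using Suc h_def by auto
  have g0: "gcd h (pderiv h) \<noteq> 0" using h0 by simp
  have gd: "gcd h (pderiv h) dvd q" using hd dvd_trans gcd_dvd1 by blast
  have go: "order a (gcd h (pderiv h)) = order a q - Suc j" for a
  proof (cases "poly h a = 0")
    case True
    have pd: "pderiv h \<noteq> 0"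
    proof
      assume "pderiv h = 0"
      then obtain c where "h = [:c:]" using pderiv_iszero by blast
      then show False using True h0 by simp
    qed
    have "order a h = Suc (order a (pderiv h))" using order_pderiv[OF h0 True] .
    then show ?thesis using order_gcd_min[OF h0 pd, of a] ho[of a] by simp
  next
    case False
    have "order a (gcd h (pderiv h)) \<le> order a h" using dvd_imp_order_le[OF h0] by simp
    moreover have "order a h = 0" using False order_0I by blast
    ultimately show ?thesis using ho[of a] by simp
  qed
  show ?case using g0 gd go h_def by simp
qed

interpretation of_rat_hom': field_hom' "of_rat :: rat \<Rightarrow> real" by unfold_locales

lemma hchain_map:
  "hchain (map_poly (of_rat :: rat \<Rightarrow> real) q) j = map_poly of_rat (hchain q j)"
  by (induction j) (simp_all add: of_rat_hom'.map_poly_gcd of_rat_hom.map_poly_pderiv)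

lemma shift_dvd:
  fixes p :: "'a::comm_ring_1 poly"
  assumes "[:-a,1:]^n dvd p"
  shows "[:-(a+c),1:]^n dvd pcompose p [:-c,1:]"
proof -
  from assms obtain g where "p = [:-a,1:]^n * g" by (elim dvdE)
  then have "pcompose p [:-c,1:] = (pcompose [:-a,1:] [:-c,1:])^n * pcompose g [:-c,1:]"
    by (simp add: pcompose_mult pcompose_hom.hom_power)
  moreover have "pcompose [:-a,1:] [:-c,1:] = [:-(a+c),1:]" by (simp add: pcompose_pCons)
  ultimately show ?thesis by simp
qed

lemma order_shift:
  fixes p :: "'a::{idom} poly"
  assumes "p \<noteq> 0"
  shows "order a (pcompose p [:-c,1:]) = order (a - c) p"
proof -
  have pc: "pcompose p [:-c,1:] \<noteq> 0" using assms by (simp add: pcompose_eq_0_iff)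
  have bk: "pcompose (pcompose p [:-c,1:]) [:c,1:] = p"
    by (simp add: pcompose_assoc[symmetric] pcompose_pCons)
  have "\<And>n. n \<le> order a (pcompose p [:-c,1:]) \<longleftrightarrow> n \<le> order (a - c) p"
  proof -
    fix n
    have "[:-(a-c),1:]^n dvd p \<Longrightarrow> [:-a,1:]^n dvd pcompose p [:-c,1:]"
      using shift_dvd[of "a-c" n p c] by simp
    moreover have "[:-a,1:]^n dvd pcompose p [:-c,1:] \<Longrightarrow> [:-(a-c),1:]^n dvd p"
      using shift_dvd[of a n "pcompose p [:-c,1:]" "-c"] bk by simp
    ultimately show "n \<le> order a (pcompose p [:-c,1:]) \<longleftrightarrow> n \<le> order (a - c) p"
      using pc assms by (metis order_divides)
  qed
  note eqv = this
  have "order a (pcompose p [:-c,1:]) \<le> order (a - c) p" using eqv by blast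
  moreover have "order (a - c) p \<le> order a (pcompose p [:-c,1:])" using eqv by blast
  ultimately show ?thesis by (rule antisym)
qed

lemma sym_real_eig:
  fixes A :: "real mat"
  assumes A: "A \<in> carrier_mat n n" and sym: "transpose_mat A = A"
    and root: "poly (map_poly complex_of_real (char_poly A)) z = 0"
  shows "Im z = 0"
proof -
  let ?B = "map_mat complex_of_real A"
  have B: "?B \<in> carrier_mat n n" using A by simp
  have "char_poly ?B = map_poly of_real (char_poly A)" by (rule of_real_hom.char_poly_hom[OF A])
  then have "eigenvalue ?B z" using eigenvalue_root_char_poly[OF B] root by simp
  then obtain v where ev: "eigenvector ?B v z" unfolding eigenvalue_def by auto
  then have v: "v \<in> carrier_vec n" "v \<noteq> 0\<^sub>v n" "?B *\<^sub>v v = z \<cdot>\<^sub>v v"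
    using A unfolding eigenvector_def by auto
  have symA: "A $$ (i,j) = A $$ (j,i)" if "i < n" "j < n" for i j
    using sym that A by (metis carrier_matD(1) carrier_matD(2) index_transpose_mat(1))
  have comp: "(\<Sum>j\<in>{0..<n}. of_real (A$$(i,j)) * v$j) = z * v$i" if i: "i < n" for i
  proof -
    have "(?B *\<^sub>v v) $ i = (z \<cdot>\<^sub>v v) $ i" using v(3) by simp
    then show ?thesis using i A v(1) by (simp add: scalar_prod_def)
  qed
  define S where "S = (\<Sum>i\<in>{0..<n}. cnj (v$i) * (\<Sum>j\<in>{0..<n}. of_real (A$$(i,j)) * v$j))"
  define N where "N = (\<Sum>i\<in>{0..<n}. cnj (v$i) * v$i)"
  have SN: "S = z * N" using comp by (simp add: S_def N_def sum_distrib_left mult_ac)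
  have "cnj S = (\<Sum>i\<in>{0..<n}. \<Sum>j\<in>{0..<n}. v$i * (of_real (A$$(i,j)) * cnj (v$j)))"
    by (simp add: S_def sum_distrib_left)
  also have "\<dots> = (\<Sum>j\<in>{0..<n}. \<Sum>i\<in>{0..<n}. v$i * (of_real (A$$(i,j)) * cnj (v$j)))"
    by (rule sum.swap)
  also have "\<dots> = S"
    unfolding S_def sum_distrib_left
    by (intro sum.cong refl) (auto simp: symA mult_ac)
  finally have cS: "cnj S = S" .
  have ImS: "Im S = 0" using cS by (metis complex_cnj_cancel_iff Reals_cnj_iff complex_is_Real_iff)
  have Nre: "N = of_real (\<Sum>i\<in>{0..<n}. (cmod (v$i))^2)"
    by (simp add: N_def mult.commute complex_norm_square[symmetric])
  obtain i where i: "i < n" "v$i \<noteq> 0" using v(1,2) by (metis eq_vecI carrier_vecD index_zero_vec)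
  have "(cmod (v$i))^2 > 0" using i by simp
  then have "(\<Sum>i\<in>{0..<n}. (cmod (v$i))^2) > 0"
    using i by (intro sum_pos2[of _ i]) auto
  then have "Re N > 0" "Im N = 0" using Nre by auto
  have "Im S = Im z * Re N" using SN \<open>Im N = 0\<close> by simp
  then have "Im z * Re N = 0" using ImS by simp
  then show ?thesis using \<open>Re N > 0\<close> by simp
qed


interpretation ofr_poly: map_poly_comm_semiring_hom "of_real :: real \<Rightarrow> complex" ..

theorem lemma2p4:
  fixes M :: "real mat" and n :: nat and k :: real
  assumes "M \<in> carrier_mat n n"
    and "transpose_mat M = M"
    and "\<And>i. i < n \<Longrightarrow> M $$ (i, i) = k"
    and "\<And>i j. i < n \<Longrightarrow> j < n \<Longrightarrow> i \<noteq> j \<Longrightarrow> M $$ (i, j) \<in> \<int>"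
    and "eigenvalue M 0"
    and "\<And>\<mu>. eigenvalue M \<mu> \<Longrightarrow> \<mu> \<noteq> 0 \<Longrightarrow> eig_mult M \<mu> < eig_mult M 0"
  shows "k \<in> \<int>"
proof -
  note Mc = assms(1)
  define Z :: "int mat" where "Z = mat n n (\<lambda>(i,j). if i = j then 0 else \<lfloor>M $$ (i,j)\<rfloor>)"
  define A :: "real mat" where "A = map_mat of_int Z"
  have Zc: "Z \<in> carrier_mat n n" by (simp add: Z_def)
  have Ac: "A \<in> carrier_mat n n" by (simp add: A_def Z_def)
  have Aent: "A $$ (i,j) = (if i = j then 0 else M $$ (i,j))" if "i < n" "j < n" for i j
    using that assms(4)[of i j] by (auto simp: A_def Z_def)
  have Msplit: "M $$ (i,j) = A $$ (i,j) + (if i = j then k else 0)" if "i < n" "j < n" for i j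
    using that Aent assms(3) by auto
  have Asym: "transpose_mat A = A"
  proof (rule eq_matI)
    fix i j assume "i < dim_row A" "j < dim_col A"
    then have ij: "i < n" "j < n" using Ac by auto
    have "M $$ (j,i) = M $$ (i,j)" using assms(2) ij Mc by (metis carrier_matD(1,2) index_transpose_mat(1))
    then show "transpose_mat A $$ (i, j) = A $$ (i, j)" using ij Ac Aent by auto
  qed (use Ac in auto)
  define qZ where "qZ = char_poly Z"
  define qR where "qR = char_poly A"
  define qQ :: "rat poly" where "qQ = map_poly of_int qZ"
  have qRZ: "qR = map_poly of_int qZ"
    unfolding qR_def qZ_def A_def by (rule of_int_hom.char_poly_hom[OF Zc])
  have qRQ: "qR = map_poly of_rat qQ"
    unfolding qRZ qQ_def by (subst map_poly_map_poly) (auto simp: o_def)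
  have monZ: "degree qZ = n \<and> coeff qZ n = 1" unfolding qZ_def by (rule degree_monic_char_poly[OF Zc])
  then have lcZ: "lead_coeff qZ = 1" by simp
  have "coeff qR n = 1" using monZ by (simp add: qRZ)
  then have qR0: "qR \<noteq> 0" by auto
  have qQ0: "qQ \<noteq> 0" using qR0 qRQ by auto
  have shiftpoly: "poly (char_poly M) x = poly qR (x - k)" for x
  proof -
    have "char_matrix M x = char_matrix A (x - k)"
    proof (rule eq_matI)
      fix i j assume "i < dim_row (char_matrix A (x - k))" "j < dim_col (char_matrix A (x - k))"
      then have ij: "i < n" "j < n" using Ac by (auto simp: char_matrix_def)
      show "char_matrix M x $$ (i, j) = char_matrix A (x - k) $$ (i, j)"
        using ij Ac Mc Msplit[OF ij] by (auto simp: char_matrix_def)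
    qed (use Ac Mc in \<open>auto simp: char_matrix_def\<close>)
    then show ?thesis unfolding qR_def char_poly_matrix[OF Mc] char_poly_matrix[OF Ac] by simp
  qed
  have cpM: "char_poly M = pcompose qR [:-k,1:]"
    by (rule poly_eq_poly_eq_iff[THEN iffD1]) (auto simp: shiftpoly poly_pcompose fun_eq_iff)
  have emult: "eig_mult M \<mu> = order (\<mu> - k) qR" for \<mu>
    unfolding eig_mult_def cpM by (rule order_shift[OF qR0])
  have eigM: "eigenvalue M \<mu> \<longleftrightarrow> poly qR (\<mu> - k) = 0" for \<mu>
    using eigenvalue_root_char_poly[OF Mc] shiftpoly by simp
  define r where "r = -k"
  define m where "m = order r qR"
  have rroot: "poly qR r = 0" using eigM[of 0] assms(5) by (simp add: r_def)
  have m1: "m \<ge> 1" using rroot qR0 by (simp add: m_def order_root Suc_le_eq)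
  have others: "order a qR < m" if "a \<noteq> r" for a
  proof (cases "poly qR a = 0")
    case True
    then have "eigenvalue M (a + k)" using eigM by simp
    moreover have "a + k \<noteq> 0" using that r_def by auto
    ultimately have "eig_mult M (a + k) < eig_mult M 0" using assms(6) by blast
    then show ?thesis by (simp add: emult m_def r_def)
  next
    case False
    then show ?thesis using m1 order_0I by fastforce
  qed
  define HQ where "HQ = hchain qQ (m - 1)"
  define H where "H = hchain qR (m - 1)"
  have HHQ: "H = map_poly of_rat HQ" unfolding H_def HQ_def qRQ by (rule hchain_map)
  have Hp: "H \<noteq> 0 \<and> H dvd qR \<and> (\<forall>a. order a H = order a qR - (m - 1))"
    unfolding H_def by (rule hchain_props[OF qR0])
  have Hr: "order r H = 1" using Hp m1 by (simp add: m_def)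
  have Ha: "order a H = 0" if "a \<noteq> r" for a using Hp others[OF that] by simp
  have H0: "H \<noteq> 0" using Hp by simp
  have Hroots: "Im z = 0" if "poly (map_poly complex_of_real H) z = 0" for z
  proof -
    obtain g where "qR = H * g" using Hp by (elim conjE dvdE)
    then have "map_poly complex_of_real qR = map_poly of_real H * map_poly of_real g"
      by (simp add: ofr_poly.hom_mult)
    then have "poly (map_poly complex_of_real qR) z = 0" using that by simp
    then show ?thesis using sym_real_eig[OF Ac Asym] unfolding qR_def by blast
  qed
  obtain G where HG: "H = [:-r,1:]^(order r H) * G" and nd: "\<not> [:-r,1:] dvd G"
    using order_decomp[OF H0] by blast
  have HG1: "H = [:-r,1:] * G" using HG Hr by simp
  have G0: "G \<noteq> 0" using H0 HG1 by auto
  have Gnoreal: "poly G a \<noteq> 0" for a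
  proof
    assume Ga: "poly G a = 0"
    show False
    proof (cases "a = r")
      case True
      then show False using nd Ga by (simp add: poly_eq_0_iff_dvd)
    next
      case False
      have "poly H a = 0" using Ga HG1 by simp
      then have "order a H \<noteq> 0" using H0 order_root by blast
      then show False using Ha[OF False] by simp
    qed
  qed
  have "degree G = 0"
  proof (rule ccontr)
    assume "degree G \<noteq> 0"
    then have "degree (map_poly complex_of_real G) \<noteq> 0" by simp
    then have "\<not> constant (poly (map_poly complex_of_real G))" by (simp add: constant_degree)
    then obtain z where z: "poly (map_poly complex_of_real G) z = 0"
      using fundamental_theorem_of_algebra by blast
    have "map_poly complex_of_real H = map_poly of_real [:-r,1:] * map_poly of_real G"
      unfolding HG1 by (rule ofr_poly.hom_mult)
    then have "poly (map_poly complex_of_real H) z = 0" using z by (simp only: poly_mult) simp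
    then have "Im z = 0" by (rule Hroots)
    then have "z = of_real (Re z)" by (simp add: complex_eq_iff)
    then have "poly G (Re z) = 0" using z by (metis of_real_eq_0_iff of_real_hom.poly_map_poly)
    then show False using Gnoreal by blast
  qed
  then obtain c where Gc: "G = [:c:]" by (metis degree_eq_zeroE)
  have c0: "c \<noteq> 0" using G0 Gc by simp
  have H1: "coeff H 1 = c" "coeff H 0 = - r * c" using HG1 Gc by auto
  have "coeff H 1 \<in> \<rat>" "coeff H 0 \<in> \<rat>" unfolding HHQ by (simp_all add: coeff_map_poly)
  then have "c \<in> \<rat>" "r * c \<in> \<rat>" using H1 by (auto simp: Rats_minus_iff)
  then have rQ: "r \<in> \<rat>" using c0 by (metis Rats_divide nonzero_mult_div_cancel_right)
  have "algebraic_int r"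
    unfolding algebraic_int_altdef_ipoly using rroot lcZ qRZ by blast
  then have "r \<in> \<int>" using rQ by (rule rational_algebraic_int_is_int)
  then show ?thesis unfolding r_def by (metis Ints_minus minus_minus)
qed

end
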